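(* Let $\lambda>0$, $\xi>0$, $v_2<v_1$ with either $v_2<0<v_1$ or $0<v_2<v_1$, and let $\tilde X(t)$ be the position of the extended telegraph process driven by GCPs with parameter $\lambda$ with Poissonian resets to the origin at rate $\xi$, started at $\tilde X(0)=0$, $V(0)=v_j$. For $j=1,2$, $t>0$ and $v_2t<x<v_1t$, the (generalized) density $\tilde p(x,t|v_j)=\tilde p_1(x,t|v_j)+\tilde p_2(x,t|v_j)$ and the flow function $\tilde w(x,t|v_j)=\tilde p_1(x,t|v_j)-\tilde p_2(x,t|v_j)$ are $$ \tilde p(x,t|v_j)=\frac{e^{-\xi t}\delta(x-v_jt)}{1+\lambda t}+\mathrm{sgn}(v_j)\mathbb 1_{\{0<\frac{x}{v_j}<t\}}\frac{\xi e^{-\xi x/v_j}}{v_j+\lambda x}+\mathbb 1_{\{v_2t<x<v_1t\}}\frac{e^{-\xi t}\lambda}{(v_1-v_2)(1+\lambda t)}+\boldsymbol I(x,t)\frac{\xi e^{\xi/\lambda}}{v_1-v_2}\Gamma_\lambda^\xi(x,t), $$ $$ \begin{aligned} \tilde w(x,t|v_j)&=(-1)^{j-1}\frac{e^{-\xi t}\delta(x-v_jt)}{1+\lambda t}+\mathbb 1_{\{v_2t<x<v_1t\}}\frac{\lambda e^{-\xi t}[\lambda(2\tau-t)+(-1)^j]}{(v_1-v_2)(1+\lambda t)^2}+\mathrm{sgn}(v_j)(-1)^{j-1}\mathbb 1_{\{0<\frac{x}{v_j}<t\}}\frac{\xi e^{-\xi x/v_j}}{v_j+\lambda x}\\ &\quad+\boldsymbol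 I(x,t)\Bigg\{\frac{2\xi(v_{3-j}+\lambda x)}{(v_1-v_2)^2}\Theta_\lambda^\xi(x,t)-\frac{\xi e^{\xi/\lambda}}{(v_1-v_2)^2}\Big[2v_{3-j}\xi\Big(\frac{x}{v_{3-j}}+\frac1\lambda\Big)+(v_1+v_2)\Big]\Gamma_\lambda^\xi(x,t)\Bigg\}. \end{aligned} $$
   Context: Geometric counting process (GCP) with intensity $\lambda>0$: a counting process $\tilde N_\lambda$ with $\tilde N_\lambda(0)=0$ obtained as a Poisson process whose rate is random and exponentially distributed with mean $\lambda$; its increments satisfy $P\{\tilde N_\lambda(t+s)-\tilde N_\lambda(t)=k\}=\frac{1}{1+\lambda s}\big(\frac{\lambda s}{1+\lambda s}\big)^k$, and each inter-event time has marginal density $\lambda/(1+\lambda t)^2$. Process without resets $(X(t),V(t))$: starts at $X(0)=0$ with $V(0)=v_j$ ($v_1,v_2\ne0$, $v_2<v_1$), velocity alternates between $v_1$ and $v_2$, $X(t)=\int_0^tV(s)ds$, with the periods spent at velocity $v_1$ and at $v_2$ governed by two independent GCPs of intensity $\lambda$. Its generalized sub-densities $p_i(x,t|v_j)=P[X(t)\in dx,V(t)=v_i|X(0)=0,V(0)=v_j]/dx$ are $p_i(x,t|v_j)=\mathbb 1_{\{i=j\}}\frac{\delta(x-v_jt)}{1+\lambda t}+\mathbb 1_{\{v_2t<x<v_1t\}}\frac{\lambda c_{i,j}}{(v_1-v_2)(1+\lambda t)^2}$ with $c_{1,1}=\lambda\tau$, $c_{1,2}=1+\lambda\tau$, $c_{2,1}=1+\lambda(t-\tau)$,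 $c_{2,2}=\lambda(t-\tau)$, $\tau=\tau(x,t)=\frac{x-v_2t}{v_1-v_2}$. Reset process $(\tilde X(t),V(t))$: same dynamics but instantaneously reset to the origin at the epochs of an independent Poisson process of rate $\xi$, restarting afresh with velocity $v_j$; its sub-densities $\tilde p_i(x,t|v_j)\,dx=P[\tilde X(t)\in dx,V(t)=v_i|\tilde X(0)=0,V(0)=v_j]$ satisfy $\tilde p_i(x,t|v_j)=e^{-\xi t}p_i(x,t|v_j)+\xi\int_0^te^{-\xi s}p_i(x,s|v_j)ds$. $\delta$ is the Dirac delta. Notation: $M_x=\max\{x/v_1,x/v_2\}$, $m_{x,t}=\min\{x/v_2,t\}$; $\Gamma(a,z_0,z_1)=\int_{z_0}^{z_1}s^{a-1}e^{-s}ds$; $\Gamma_\lambda^\xi(x,t)=\Gamma[0,(M_x+\frac1\lambda)\xi,(t+\frac1\lambda)\xi]$ if $v_2<0<v_1$, $=\Gamma[0,(\frac x{v_1}+\frac1\lambda)\xi,(m_{x,t}+\frac1\lambda)\xi]$ if $0<v_2<v_1$; $\boldsymbol I(x,t)=\mathbb 1_{\{\min\{v_2t,0\}<x<v_1t\}}$; $\Theta_\lambda^\xi(x,t)=\frac{e^{-\xi M_x}}{1+\lambda M_x}-\frac{e^{-\xi t}}{1+\lambda t}$ if $v_2<0<v_1$, $=\frac{e^{-\xi x/v_1}}{1+\lambda x/v_1}-\frac{e^{-\xi m_{x,t}}}{1+\lambda m_{x,t}}$ if $0<v_2<v_1$. *)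

theory Defs
  imports "HOL-Analysis.Analysis"
begin

definition vel :: "real \<Rightarrow> real \<Rightarrow> nat \<Rightarrow> real" where
  "vel v1 v2 j = (if j = 1 then v1 else v2)"

definition tau :: "real \<Rightarrow> real \<Rightarrow> real \<Rightarrow> real \<Rightarrow> real" where
  "tau v1 v2 x t = (x - v2 * t) / (v1 - v2)"

definition coef :: "real \<Rightarrow> real \<Rightarrow> real \<Rightarrow> nat \<Rightarrow> nat \<Rightarrow> real \<Rightarrow> real \<Rightarrow> real" where
  "coef lam v1 v2 i j x t =
     (if i = 1 \<and> j = 1 then lam * tau v1 v2 x t
      else if i = 1 then 1 + lam * tau v1 v2 x t
      else if j = 1 then 1 + lam * (t - tau v1 v2 x t)
      else lam * (t - tau v1 v2 x t))"

text \<open>Absolutely continuous part of the sub-density p_i(x,t|v_j) of the process without resets.\<close>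
definition pcont :: "real \<Rightarrow> real \<Rightarrow> real \<Rightarrow> nat \<Rightarrow> nat \<Rightarrow> real \<Rightarrow> real \<Rightarrow> real" where
  "pcont lam v1 v2 i j x t =
     indicator {v2 * t <..< v1 * t} x * lam * coef lam v1 v2 i j x t / ((v1 - v2) * (1 + lam * t)^2)"

text \<open>The generalized sub-density p_i(.,t|v_j), acting on a test function phi:
  integral of phi against  1{i=j} delta(x - v_j t)/(1+lam t) + pcont.\<close>
definition pact :: "real \<Rightarrow> real \<Rightarrow> real \<Rightarrow> nat \<Rightarrow> nat \<Rightarrow> (real \<Rightarrow> real) \<Rightarrow> real \<Rightarrow> real" where
  "pact lam v1 v2 i j phi t =
     (if i = j then phi (vel v1 v2 j * t) / (1 + lam * t) else 0)
     + integral UNIV (\<lambda>x. phi x * pcont lam v1 v2 i j x t)"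

text \<open>The generalized sub-density of the reset process, acting on a test function, via
  tilde p_i(x,t|v_j) = e^{-xi t} p_i(x,t|v_j) + xi int_0^t e^{-xi s} p_i(x,s|v_j) ds.\<close>
definition ptact :: "real \<Rightarrow> real \<Rightarrow> real \<Rightarrow> real \<Rightarrow> nat \<Rightarrow> nat \<Rightarrow> (real \<Rightarrow> real) \<Rightarrow> real \<Rightarrow> real" where
  "ptact lam xi v1 v2 i j phi t =
     exp (- xi * t) * pact lam v1 v2 i j phi t
     + xi * integral {0..t} (\<lambda>s. exp (- xi * s) * pact lam v1 v2 i j phi s)"

definition incgamma :: "real \<Rightarrow> real \<Rightarrow> real \<Rightarrow> real" where
  "incgamma a z0 z1 =
     (if z0 \<le> z1 then integral {z0..z1} (\<lambda>s. s powr (a - 1) * exp (- s))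
      else - integral {z1..z0} (\<lambda>s. s powr (a - 1) * exp (- s)))"

definition Mx :: "real \<Rightarrow> real \<Rightarrow> real \<Rightarrow> real" where
  "Mx v1 v2 x = max (x / v1) (x / v2)"

definition mxt :: "real \<Rightarrow> real \<Rightarrow> real \<Rightarrow> real" where
  "mxt v2 x t = min (x / v2) t"

definition GammaL :: "real \<Rightarrow> real \<Rightarrow> real \<Rightarrow> real \<Rightarrow> real \<Rightarrow> real \<Rightarrow> real" where
  "GammaL lam xi v1 v2 x t =
     (if v2 < 0 \<and> 0 < v1
      then incgamma 0 ((Mx v1 v2 x + 1 / lam) * xi) ((t + 1 / lam) * xi)
      else incgamma 0 ((x / v1 + 1 / lam) * xi) ((mxt v2 x t + 1 / lam) * xi))"

definition Ibold :: "real \<Rightarrow> real \<Rightarrow> real \<Rightarrow> real \<Rightarrow> real" where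
  "Ibold v1 v2 x t = indicator {min (v2 * t) 0 <..< v1 * t} x"

definition ThetaL :: "real \<Rightarrow> real \<Rightarrow> real \<Rightarrow> real \<Rightarrow> real \<Rightarrow> real \<Rightarrow> real" where
  "ThetaL lam xi v1 v2 x t =
     (if v2 < 0 \<and> 0 < v1
      then exp (- xi * Mx v1 v2 x) / (1 + lam * Mx v1 v2 x) - exp (- xi * t) / (1 + lam * t)
      else exp (- xi * (x / v1)) / (1 + lam * (x / v1))
           - exp (- xi * mxt v2 x t) / (1 + lam * mxt v2 x t))"

text \<open>Absolutely continuous part of the density tilde p(x,t|v_j) claimed in the theorem.\<close>
definition dens_cont :: "real \<Rightarrow> real \<Rightarrow> real \<Rightarrow> real \<Rightarrow> nat \<Rightarrow> real \<Rightarrow> real \<Rightarrow> real" where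
  "dens_cont lam xi v1 v2 j x t =
     sgn (vel v1 v2 j) * indicator {0 <..< t} (x / vel v1 v2 j)
       * xi * exp (- xi * x / vel v1 v2 j) / (vel v1 v2 j + lam * x)
     + indicator {v2 * t <..< v1 * t} x * exp (- xi * t) * lam / ((v1 - v2) * (1 + lam * t))
     + Ibold v1 v2 x t * xi * exp (xi / lam) / (v1 - v2) * GammaL lam xi v1 v2 x t"

text \<open>Absolutely continuous part of the flow function tilde w(x,t|v_j) claimed in the theorem.\<close>
definition flow_cont :: "real \<Rightarrow> real \<Rightarrow> real \<Rightarrow> real \<Rightarrow> nat \<Rightarrow> real \<Rightarrow> real \<Rightarrow> real" where
  "flow_cont lam xi v1 v2 j x t =
     indicator {v2 * t <..< v1 * t} x * lam * exp (- xi * t)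
       * (lam * (2 * tau v1 v2 x t - t) + (-1) ^ j) / ((v1 - v2) * (1 + lam * t)^2)
     + sgn (vel v1 v2 j) * (-1) ^ (j - 1) * indicator {0 <..< t} (x / vel v1 v2 j)
       * xi * exp (- xi * x / vel v1 v2 j) / (vel v1 v2 j + lam * x)
     + Ibold v1 v2 x t *
       (2 * xi * (vel v1 v2 (3 - j) + lam * x) / (v1 - v2)^2 * ThetaL lam xi v1 v2 x t
        - xi * exp (xi / lam) / (v1 - v2)^2
          * (2 * vel v1 v2 (3 - j) * xi * (x / vel v1 v2 (3 - j) + 1 / lam) + (v1 + v2))
          * GammaL lam xi v1 v2 x t)"

end

theory Submission
  imports Defs
begin

definition Ef :: "real \<Rightarrow> real \<Rightarrow> real \<Rightarrow> real" where
  "Ef lam xi s = exp (- xi * s) / (1 + lam * s)"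
definition Kf :: "real \<Rightarrow> real \<Rightarrow> real \<Rightarrow> real \<Rightarrow> real \<Rightarrow> real" where
  "Kf lam xi al be s = exp (- xi * s) * (al + be * s) / (1 + lam * s)^2"
definition Rf :: "real \<Rightarrow> real \<Rightarrow> real \<Rightarrow> real \<Rightarrow> real \<Rightarrow> real \<Rightarrow> real" where
  "Rf lam xi al be a b =
     (be / lam - (al - be / lam) * xi / lam) * (exp (xi / lam) / lam)
        * incgamma 0 ((a + 1 / lam) * xi) ((b + 1 / lam) * xi)
     + (- (al - be / lam) / lam) * (Ef lam xi b - Ef lam xi a)"

lemma aux1: fixes a l x w e m :: real assumes "l \<noteq> 0" "x \<noteq> 0" "w \<noteq> 0"
  shows "a / l * (x * (l / (x * w) * (e * m))) = (a * m) * e / w"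
  using assms by (simp add: field_simps)

lemma ftc_K:
  assumes lam: "lam > 0" and xi: "xi > 0" and a: "0 \<le> a" "a \<le> b"
  shows "(Kf lam xi al be has_integral Rf lam xi al be a b) {a..b}"
proof -
  define g :: "real \<Rightarrow> real" where "g u = u powr (0 - 1) * exp (- u)" for u
  define c where "c = (a + 1 / lam) * xi"
  define d where "d = (b + 1 / lam) * xi"
  have c0: "c > 0" using lam xi a unfolding c_def by (simp add: add_nonneg_pos)
  have cd: "c \<le> d" using a xi unfolding c_def d_def by (simp add: mult_right_mono)
  have contg: "continuous_on {c..d} g"
    unfolding g_def using c0 by (intro continuous_intros) auto
  define A where "A = (be / lam - (al - be / lam) * xi / lam) * (exp (xi / lam) / lam)"
  define B where "B = - (al - be / lam) / lam"
  define H where "H s = A * integral {c..(s + 1 / lam) * xi} g + B * Ef lam xi s" for s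
  have deriv: "(H has_vector_derivative Kf lam xi al be s) (at s within {a..b})" if s: "s \<in> {a..b}" for s
  proof -
    have s0: "0 \<le> s" using s a by auto
    have pos: "1 + lam * s > 0" using s0 lam by (simp add: add_pos_nonneg)
    have us: "(s + 1 / lam) * xi \<in> {c..d}" using s xi unfolding c_def d_def by (auto intro: mult_right_mono)
    have "((\<lambda>u. integral {c..u} g) has_vector_derivative g ((s + 1 / lam) * xi)) (at ((s + 1 / lam) * xi) within {c..d})"
      by (rule integral_has_vector_derivative[OF contg us])
    then have i1: "((\<lambda>u. integral {c..u} g) has_vector_derivative g ((s + 1 / lam) * xi)) (at ((s + 1 / lam) * xi) within (\<lambda>s. (s + 1 / lam) * xi) ` {a..b})"
      by (rule has_vector_derivative_within_subset) (use xi c_def d_def in \<open>auto intro: mult_right_mono\<close>)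
    have u': "((\<lambda>s. (s + 1 / lam) * xi) has_vector_derivative xi) (at s within {a..b})"
      unfolding has_real_derivative_iff_has_vector_derivative[symmetric]
      by (auto intro!: derivative_eq_intros)
    have i2: "((\<lambda>s. integral {c..(s + 1 / lam) * xi} g) has_vector_derivative xi *\<^sub>R g ((s + 1 / lam) * xi)) (at s within {a..b})"
      using vector_diff_chain_within[OF u' i1] by (simp add: o_def)
    have e': "(Ef lam xi has_real_derivative (- xi * exp (- xi * s) * (1 + lam * s) - exp (- xi * s) * lam) / (1 + lam * s)^2) (at s within {a..b})"
      unfolding Ef_def using pos by (auto intro!: derivative_eq_intros simp: power2_eq_square)
    have hd: "(H has_real_derivative A * (xi * g ((s + 1 / lam) * xi)) + B * ((- xi * exp (- xi * s) * (1 + lam * s) - exp (- xi * s) * lam) / (1 + lam * s)^2)) (at s within {a..b})"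
      unfolding H_def
      using i2[unfolded has_real_derivative_iff_has_vector_derivative[symmetric]] e'
      by (auto intro!: derivative_eq_intros)
    have upos: "(s + 1 / lam) * xi > 0" using s0 lam xi by (simp add: add_nonneg_pos)
    have ueq: "(s + 1 / lam) * xi = xi * (1 + lam * s) / lam" using lam by (simp add: field_simps)
    have gval: "g ((s + 1 / lam) * xi) = lam / (xi * (1 + lam * s)) * (exp (- xi * s) * exp (- xi / lam))"
    proof -
      have "g ((s + 1 / lam) * xi) = inverse ((s + 1 / lam) * xi) * exp (- ((s + 1 / lam) * xi))"
        unfolding g_def using upos by (simp add: powr_minus)
      also have "exp (- ((s + 1 / lam) * xi)) = exp (- xi * s) * exp (- xi / lam)"
        by (simp add: exp_add[symmetric] algebra_simps)
      finally show ?thesis using ueq by (simp add: field_simps)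
    qed
    have ex: "exp (xi / lam) * exp (- xi / lam) = 1" by (simp add: exp_add[symmetric])
    have w: "1 + lam * s \<noteq> 0" and l: "lam \<noteq> 0" using pos lam by auto
    have step1: "A * (xi * g ((s + 1 / lam) * xi)) = (be / lam - (al - be / lam) * xi / lam) * (exp (- xi * s) / (1 + lam * s))"
    proof -
      have "exp (xi/lam) / lam * (xi * g ((s + 1 / lam) * xi)) = exp (xi/lam) / lam * (xi * (lam / (xi * (1 + lam * s)) * (exp (- xi * s) * exp (- xi / lam))))"
        unfolding gval ..
         also have "\<dots> = exp (xi / lam) * exp (- xi / lam) * exp (- xi * s) / (1 + lam * s)"
        using w l xi by (intro aux1) auto
      also have "\<dots> = exp (- xi * s) / (1 + lam * s)" using ex pos lam xi by simp
      finally show ?thesis unfolding A_def by (simp only: mult.assoc)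
    qed
    have s_eq: "s = ((1 + lam * s) - 1) / lam" using lam by simp
    have step2: "(be / lam - (al - be / lam) * xi / lam) * (e / w)
       + B * ((- xi * e * w - e * lam) / w^2) = e * (al + be * ((w - 1) / lam)) / w^2" if "w \<noteq> 0" for e w :: real
      unfolding B_def using l that
      apply (simp add: divide_simps power2_eq_square)
      apply (simp add: algebra_simps)
      done
    have "A * (xi * g ((s + 1 / lam) * xi)) + B * ((- xi * exp (- xi * s) * (1 + lam * s) - exp (- xi * s) * lam) / (1 + lam * s)^2)
          = Kf lam xi al be s"
      unfolding step1 Kf_def using step2[OF w, of "exp (- xi * s)"] s_eq by (metis mult.assoc)
    with hd show ?thesis by (simp add: has_real_derivative_iff_has_vector_derivative)
  qed
  have "(Kf lam xi al be has_integral H b - H a) {a..b}"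
    by (rule fundamental_theorem_of_calculus[OF a(2) deriv])
  moreover have "H b - H a = Rf lam xi al be a b"
    unfolding H_def Rf_def A_def B_def incgamma_def g_def using cd by (simp add: c_def d_def algebra_simps)
  ultimately show ?thesis by simp
qed

definition aa :: "real \<Rightarrow> real \<Rightarrow> real \<Rightarrow> real" where
  "aa v1 v2 x = (if v2 < 0 then Mx v1 v2 x else x / v1)"
definition bb :: "real \<Rightarrow> real \<Rightarrow> real \<Rightarrow> real \<Rightarrow> real" where
  "bb v1 v2 x t = (if v2 < 0 then t else mxt v2 x t)"

lemma Q_has:
  assumes lam: "lam > 0" and xi: "xi > 0" and v12: "v2 < v1"
    and cs: "(v2 < 0 \<and> 0 < v1) \<or> (0 < v2 \<and> v2 < v1)" and t: "t > 0"
  shows "((\<lambda>s. indicator {v2 * s <..< v1 * s} x * Kf lam xi al be s) has_integral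
           (Ibold v1 v2 x t * Rf lam xi al be (aa v1 v2 x) (bb v1 v2 x t))) {0..t}"
proof (cases "x \<in> {min (v2 * t) 0 <..< v1 * t}")
  case False
  have "indicator {v2 * s <..< v1 * s} x = (0::real)" if s: "s \<in> {0..t}" for s
  proof -
    have "\<not> (v2 * s < x \<and> x < v1 * s)"
    proof
      assume h: "v2 * s < x \<and> x < v1 * s"
      have "v1 * s \<le> v1 * t" using s cs by (auto intro: mult_left_mono)
      show False
      proof (cases "v2 < 0")
        case True
        then have "v2 * t \<le> v2 * s" using s by (auto intro: mult_left_mono_neg)
        moreover have "v2 * t < 0" using True t by (simp add: mult_neg_pos)
        ultimately show False using h False cs \<open>v1 * s \<le> v1 * t\<close> by (auto simp: min_def split: if_splits)
      next
        case False2: False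
        then have "0 \<le> v2 * s" "0 < v2 * t" using s cs t by auto
        then show False using h False cs \<open>v1 * s \<le> v1 * t\<close> by (auto simp: min_def split: if_splits)
      qed
    qed
    then show ?thesis by (simp add: indicator_def)
  qed
  then have "((\<lambda>s. indicator {v2 * s <..< v1 * s} x * Kf lam xi al be s) has_integral 0) {0..t}"
    by (intro has_integral_spike_finite[OF finite.emptyI _ has_integral_0]) auto
  then show ?thesis using False by (simp add: Ibold_def)
next
  case True
  define a where "a = aa v1 v2 x"
  define b where "b = bb v1 v2 x t"
  have key: "0 \<le> a \<and> a \<le> b \<and> b \<le> t \<and>
    (\<forall>s \<in> {0..t} - {a, b}. (v2 * s < x \<and> x < v1 * s) = (s \<in> {a..b}))"
  proof (cases "v2 < 0")
    case v2: True
    then have v1: "v1 > 0" using cs by auto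
    have e1: "v2 * s < x \<longleftrightarrow> x / v2 < s" for s using v2 by (simp add: neg_divide_less_eq mult.commute)
    have e2: "x < v1 * s \<longleftrightarrow> x / v1 < s" for s using v1 by (simp add: pos_divide_less_eq mult.commute)
    have ad: "a = max (x / v1) (x / v2)" unfolding a_def aa_def Mx_def using v2 by simp
    have bd: "b = t" unfolding b_def bb_def using v2 by simp
    have "v2 * t < 0" using v2 t by (simp add: mult_neg_pos)
    then have xr: "v2 * t < x" "x < v1 * t" using True by (auto simp: min_def split: if_splits)
    have "0 \<le> x / v1 \<or> 0 \<le> x / v2"
      using v1 v2 by (cases "0 \<le> x") (auto simp: divide_nonneg_pos divide_nonpos_neg)
    then have a0: "0 \<le> a" unfolding ad by auto
    have "a < t" unfolding ad using e1[of t] e2[of t] xr by auto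
    then show ?thesis using a0 e1 e2 unfolding ad bd by auto
  next
    case v2: False
    then have v2p: "0 < v2" "0 < v1" using cs by auto
    have "0 < v2 * t" using v2p t by simp
    then have xr: "0 < x" "x < v1 * t" using True by (auto simp: min_def split: if_splits)
    have e1: "v2 * s < x \<longleftrightarrow> s < x / v2" for s using v2p by (simp add: pos_less_divide_eq mult.commute)
    have e2: "x < v1 * s \<longleftrightarrow> x / v1 < s" for s using v2p by (simp add: pos_divide_less_eq mult.commute)
    have ad: "a = x / v1" unfolding a_def aa_def using v2 by simp
    have bd: "b = min (x / v2) t" unfolding b_def bb_def mxt_def using v2 by simp
    have "x / v1 < x / v2" using xr v2p v12 by (intro divide_strict_left_mono) auto
    moreover have "x / v1 < t" using e2[of t] xr by simp
    moreover have "0 < x / v1" using xr v2p by simp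
    ultimately show ?thesis using e1 e2 unfolding ad bd by (auto simp: min_def)
  qed
  have ftc: "(Kf lam xi al be has_integral Rf lam xi al be a b) {a..b}"
    using key by (intro ftc_K lam xi) auto
  have "((\<lambda>s. if s \<in> cbox a b then Kf lam xi al be s else 0) has_integral Rf lam xi al be a b) (cbox 0 t)"
    by (rule has_integral_restrict_closed_subinterval) (use ftc key in auto)
  then have r: "((\<lambda>s. if s \<in> {a..b} then Kf lam xi al be s else 0) has_integral Rf lam xi al be a b) {0..t}"
    by simp
  have "((\<lambda>s. indicator {v2 * s <..< v1 * s} x * Kf lam xi al be s) has_integral Rf lam xi al be a b) {0..t}"
    by (rule has_integral_spike_finite[OF _ _ r, of "{a, b}"]) (use key in \<open>auto simp: indicator_def\<close>)
  then show ?thesis using True by (simp add: Ibold_def a_def b_def)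
qed
lemma integrable_bdd1:
  fixes f :: "real \<Rightarrow> real"
  assumes [measurable]: "f \<in> borel_measurable borel" and "\<And>x. \<bar>f x\<bar> \<le> B" and "\<And>x. x \<notin> {a..b} \<Longrightarrow> f x = 0"
  shows "integrable lborel f"
  by (rule integrableI_bounded_set[where A="{a..b}" and B=B]) (use assms emeasure_lborel_cbox_finite[of a b] in \<open>auto simp: cbox_interval\<close>)

lemma integrable_bdd2:
  fixes f :: "real \<times> real \<Rightarrow> real"
  assumes [measurable]: "f \<in> borel_measurable (lborel \<Otimes>\<^sub>M lborel)" and "\<And>z. \<bar>f z\<bar> \<le> B"
    and "\<And>z. z \<notin> {a..b} \<times> {c..d} \<Longrightarrow> f z = 0"
  shows "integrable (lborel \<Otimes>\<^sub>M lborel) f"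
proof (rule integrableI_bounded_set[where A="{a..b} \<times> {c..d}" and B=B])
  show "{a..b} \<times> {c..d} \<in> sets (lborel \<Otimes>\<^sub>M lborel)" by (intro pair_measureI) auto
  have "emeasure lborel {a..b} < \<infinity>" "emeasure lborel {c..d} < \<infinity>"
    using emeasure_lborel_cbox_finite[of a b] emeasure_lborel_cbox_finite[of c d] by (auto simp: cbox_interval)
  then show "emeasure (lborel \<Otimes>\<^sub>M lborel) ({a..b} \<times> {c..d}) < \<infinity>"
    by (subst lborel.emeasure_pair_measure_Times) (auto simp: ennreal_mult_less_top)
qed (use assms in auto)

lemma ind_ioo: "indicator {a<..<b} (x::real) = (if a < x \<and> x < b then 1 else (0::real))"
  by (auto simp: indicator_def)
lemma ind_icc: "indicator {a..b} (x::real) = (if a \<le> x \<and> x \<le> b then 1 else (0::real))"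
  by (auto simp: indicator_def)

definition Qi :: "real \<Rightarrow> real \<Rightarrow> real \<Rightarrow> real \<Rightarrow> nat \<Rightarrow> nat \<Rightarrow> real \<Rightarrow> real \<Rightarrow> real" where
  "Qi lam xi v1 v2 i j x t = (\<integral>s. indicator {0..t} s * exp (- xi * s) * pcont lam v1 v2 i j x s \<partial>lborel)"

lemma alg_diff:
  fixes lam xi v1 v2 vo sg x I e G Ea Eb :: real
  assumes l: "lam \<noteq> 0" and d: "v1 - v2 \<noteq> 0" and vo: "vo \<noteq> 0"
    and c: "(sg = -1 \<and> vo = v2) \<or> (sg = 1 \<and> vo = v1)"
  shows "xi * (lam / (v1 - v2) * (I * (((- lam * (v1 + v2) / (v1 - v2)) / lam - ((2 * lam * x / (v1 - v2) + sg) - (- lam * (v1 + v2) / (v1 - v2)) / lam) * xi / lam) * (e / lam) * G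
        + (- ((2 * lam * x / (v1 - v2) + sg) - (- lam * (v1 + v2) / (v1 - v2)) / lam) / lam) * (Eb - Ea))))
    = I * (2 * xi * (vo + lam * x) / (v1 - v2)^2 * (Ea - Eb)
        - xi * e / (v1 - v2)^2 * (2 * vo * xi * (x / vo + 1 / lam) + (v1 + v2)) * G)"
  using c
proof
  assume h: "sg = -1 \<and> vo = v2"
  define D where "D = v1 - v2"
  have D: "v1 = v2 + D" "D \<noteq> 0" using d unfolding D_def by auto
  show ?thesis unfolding D(1) using l D(2) vo h by (simp add: field_simps power2_eq_square; simp add: algebra_simps)
next
  assume h: "sg = 1 \<and> vo = v1"
  define D where "D = v1 - v2"
  have D: "v2 = v1 - D" "D \<noteq> 0" using d unfolding D_def by auto
  show ?thesis unfolding D(1) using l D(2) vo h by (simp add: field_simps power2_eq_square; simp add: algebra_simps)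
qed

lemma lin_aux:
  fixes e c1 c2 I l C1 C2 d W A :: real
  assumes "c1 * C1 + c2 * C2 = A" "d \<noteq> 0" "W \<noteq> 0"
  shows "e * (c1 * (I * l * C1 / (d * W)) + c2 * (I * l * C2 / (d * W))) = l / d * (I * (e * A / W))"
proof -
  have "e * (c1 * (I * l * C1 / (d * W)) + c2 * (I * l * C2 / (d * W))) = e * I * l * (c1 * C1 + c2 * C2) / (d * W)"
    using assms(2,3) by (simp add: field_simps)
  then show ?thesis using assms(2,3) unfolding assms(1)[symmetric] by (simp add: field_simps)
qed

lemma coef_diff:
  fixes lam v1 v2 x s :: real
  assumes d: "v1 \<noteq> v2" and j: "j = 1 \<or> j = 2"
  shows "1 * coef lam v1 v2 1 j x s + (-1) * coef lam v1 v2 2 j x s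
     = (2 * lam * x / (v1 - v2) + (-1) ^ j) + (- lam * (v1 + v2) / (v1 - v2)) * s"
proof -
  define D where "D = v1 - v2"
  have D: "v1 = v2 + D" "D \<noteq> 0" using d unfolding D_def by auto
  show ?thesis using j unfolding coef_def tau_def D(1)
    using D(2) by (auto simp: field_simps)
qed
lemma sum_aux:
  fixes lam xi d I e G :: real
  assumes "lam \<noteq> 0" "d \<noteq> 0"
  shows "xi * (lam / d * (I * (exp (xi / lam) / lam * G))) = I * xi * exp (xi / lam) / d * G"
  using assms by (simp add: field_simps)

lemma cancel_aux:
  fixes A d W :: real assumes "W \<noteq> 0" "d \<noteq> 0"
  shows "A * W / (d * W^2) = A / (d * W)"
  using assms by (simp add: field_simps power2_eq_square)

definition Sfun :: "real \<Rightarrow> real \<Rightarrow> real \<Rightarrow> real \<Rightarrow> nat \<Rightarrow> real \<Rightarrow> real \<Rightarrow> real" where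
  "Sfun lam xi v1 v2 j x t = sgn (vel v1 v2 j) * indicator {0 <..< t} (x / vel v1 v2 j)
       * xi * exp (- xi * x / vel v1 v2 j) / (vel v1 v2 j + lam * x)"

context
  fixes lam xi v1 v2 t :: real and j :: nat and phi :: "real \<Rightarrow> real"
  assumes lam: "lam > 0" and xi: "xi > 0" and v12: "v2 < v1"
    and cs: "(v2 < 0 \<and> 0 < v1) \<or> (0 < v2 \<and> v2 < v1)" and jj: "j \<in> {1, 2}" and t: "t > 0"
    and phic: "continuous_on UNIV phi"
begin

lemma phi_meas[measurable]: "phi \<in> borel_measurable borel"
  using phic by (rule borel_measurable_continuous_onI)

lemma pcont_bound:
  assumes s: "s \<in> {0..t}"
  shows "\<bar>pcont lam v1 v2 i j x s\<bar> \<le> lam * (1 + lam * t) / (v1 - v2)"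
proof (cases "v2 * s < x \<and> x < v1 * s")
  case False
  then have "pcont lam v1 v2 i j x s = 0" by (simp add: pcont_def indicator_def)
  then show ?thesis using lam t v12 by simp
next
  case True
  define c where "c = coef lam v1 v2 i j x s"
  have tau: "0 < tau v1 v2 x s" "tau v1 v2 x s < s"
    using True v12 by (auto simp: tau_def field_simps)
  have st: "lam * s \<le> lam * t" using s lam by auto
  have l1: "0 \<le> lam * tau v1 v2 x s" "lam * tau v1 v2 x s \<le> lam * s" "0 \<le> lam * s"
    using tau lam s by auto
  have c: "0 \<le> c" "c \<le> 1 + lam * t"
    using l1 st unfolding c_def coef_def
    by (auto simp: algebra_simps)
  have w: "1 \<le> (1 + lam * s)^2" using s lam by (simp add: one_le_power)
  have "pcont lam v1 v2 i j x s = lam * c / ((v1 - v2) * (1 + lam * s)^2)"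
    using True by (simp add: pcont_def c_def indicator_def)
  also have "\<dots> \<le> lam * c / (v1 - v2)"
    using lam c v12 w by (intro divide_left_mono) (auto intro!: mult_pos_pos)
  also have "\<dots> \<le> lam * (1 + lam * t) / (v1 - v2)"
    using lam c v12 by (intro divide_right_mono mult_left_mono) auto
  finally have "pcont lam v1 v2 i j x s \<le> lam * (1 + lam * t) / (v1 - v2)" .
  moreover have "0 \<le> pcont lam v1 v2 i j x s"
    using True lam c v12 by (simp add: pcont_def c_def indicator_def)
  ultimately show ?thesis by simp
qed

lemma pcont_supp:
  assumes s: "s \<in> {0..t}" and x: "x \<notin> {- ((\<bar>v1\<bar> + \<bar>v2\<bar>) * t) .. (\<bar>v1\<bar> + \<bar>v2\<bar>) * t}"
  shows "pcont lam v1 v2 i j x s = 0"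
proof -
  have "\<bar>v1 * s\<bar> \<le> \<bar>v1\<bar> * t" "\<bar>v2 * s\<bar> \<le> \<bar>v2\<bar> * t"
    using s by (auto simp: abs_mult intro: mult_left_mono)
  then have "\<not> (v2 * s < x \<and> x < v1 * s)" using x t by (auto simp: abs_le_iff algebra_simps)
  then show ?thesis by (simp add: pcont_def indicator_def)
qed

lemma phi_bdd:
  obtains B where "B \<ge> 0" "\<And>x. x \<in> {a..b} \<Longrightarrow> \<bar>phi x\<bar> \<le> B"
proof -
  have "compact (phi ` {a..b})"
    by (rule compact_continuous_image) (use phic continuous_on_subset in blast)+
  then obtain B where "\<forall>y\<in>phi ` {a..b}. norm y \<le> B"
    using compact_imp_bounded bounded_iff by metis
  then show ?thesis using that[of "max B 0"] by force
qed

lemma pcont_meas1[measurable]: "(\<lambda>x. pcont lam v1 v2 i j x s) \<in> borel_measurable borel"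
  unfolding pcont_def coef_def tau_def ind_ioo by measurable

lemma pcont_meas2[measurable]: "(\<lambda>s. pcont lam v1 v2 i j x s) \<in> borel_measurable borel"
  unfolding pcont_def coef_def tau_def ind_ioo by measurable

lemma int_x:
  assumes s: "s \<in> {0..t}"
  shows "integrable lborel (\<lambda>x. phi x * pcont lam v1 v2 i j x s)"
proof -
  define R where "R = (\<bar>v1\<bar> + \<bar>v2\<bar>) * t"
  obtain B where B: "B \<ge> 0" "\<And>x. x \<in> {-R..R} \<Longrightarrow> \<bar>phi x\<bar> \<le> B" using phi_bdd by blast
  define C where "C = lam * (1 + lam * t) / (v1 - v2)"
  have C: "\<bar>pcont lam v1 v2 i j x s\<bar> \<le> C" for x using pcont_bound[OF s] C_def by simp
  show ?thesis
  proof (rule integrable_bdd1[where a="-R" and b=R and B="B * C"])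
    fix x
    show "\<bar>phi x * pcont lam v1 v2 i j x s\<bar> \<le> B * C"
    proof (cases "x \<in> {-R..R}")
      case True
      then show ?thesis using B C[of x] by (simp add: abs_mult mult_mono)
    next
      case False
      then show ?thesis using pcont_supp[OF s, of x i] B C[of x] R_def
        by (simp add: order_trans[OF abs_ge_zero])
    qed
  next
    fix x assume "x \<notin> {-R..R}"
    then show "phi x * pcont lam v1 v2 i j x s = 0" using pcont_supp[OF s, of x i] R_def by simp
  qed measurable
qed

lemma int_s:
  "integrable lborel (\<lambda>s. indicator {0..t} s * exp (- xi * s) * pcont lam v1 v2 i j x s)"
proof -
  define C where "C = lam * (1 + lam * t) / (v1 - v2)"
  show ?thesis
  proof (rule integrable_bdd1[where a=0 and b=t and B=C])
    fix s
    show "\<bar>indicator {0..t} s * exp (- xi * s) * pcont lam v1 v2 i j x s\<bar> \<le> C"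
    proof (cases "s \<in> {0..t}")
      case True
      have "exp (- xi * s) \<le> 1" using True xi by simp
      have "\<bar>exp (- xi * s) * pcont lam v1 v2 i j x s\<bar> = exp (- xi * s) * \<bar>pcont lam v1 v2 i j x s\<bar>"
        by (simp add: abs_mult)
      also have "\<dots> \<le> 1 * C"
        using pcont_bound[OF True, of i x] C_def \<open>exp (- xi * s) \<le> 1\<close> by (intro mult_mono) auto
      finally have "\<bar>exp (- xi * s) * pcont lam v1 v2 i j x s\<bar> \<le> 1 * C" .
      then show ?thesis using True by simp
    next
      case False
      have "\<bar>pcont lam v1 v2 i j x 0\<bar> \<le> C" using pcont_bound[of 0 i x] t C_def by simp
      then have "0 \<le> C" by linarith
      then show ?thesis using False by simp
    qed
  qed (auto simp: ind_icc)
qed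

lemma int_2:
  "integrable (lborel \<Otimes>\<^sub>M lborel) (\<lambda>(x, s). indicator {0..t} s * exp (- xi * s) * (phi x * pcont lam v1 v2 i j x s))"
proof -
  define R where "R = (\<bar>v1\<bar> + \<bar>v2\<bar>) * t"
  obtain B where B: "B \<ge> 0" "\<And>x. x \<in> {-R..R} \<Longrightarrow> \<bar>phi x\<bar> \<le> B" using phi_bdd by blast
  define C where "C = lam * (1 + lam * t) / (v1 - v2)"
  have C0: "0 \<le> C" using pcont_bound[of 0 i 0] t C_def by (simp add: order_trans[OF abs_ge_zero])
  show ?thesis
  proof (rule integrable_bdd2[where a="-R" and b=R and c=0 and d=t and B="B * C"])
    fix z :: "real \<times> real"
    obtain x s where z: "z = (x, s)" by force
    show "\<bar>(\<lambda>(x, s). indicator {0..t} s * exp (- xi * s) * (phi x * pcont lam v1 v2 i j x s)) z\<bar> \<le> B * C"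
    proof (cases "s \<in> {0..t} \<and> x \<in> {-R..R}")
      case True
      have e: "exp (- xi * s) \<le> 1" using True xi by simp
      have "\<bar>exp (- xi * s) * (phi x * pcont lam v1 v2 i j x s)\<bar> \<le> 1 * (B * C)"
        unfolding abs_mult using True e B pcont_bound[of s i x] C_def
        by (intro mult_mono) auto
      then show ?thesis using True z by simp
    next
      case False
      then have "indicator {0..t} s * exp (- xi * s) * (phi x * pcont lam v1 v2 i j x s) = 0"
        using pcont_supp[of s x i] R_def by (auto simp: ind_icc)
      then have "(\<lambda>(x, s). indicator {0..t} s * exp (- xi * s) * (phi x * pcont lam v1 v2 i j x s)) z = 0"
        using z by simp
      then show ?thesis using B C0 by (metis abs_zero mult_nonneg_nonneg)
    qed
  next
    fix z :: "real \<times> real" assume "z \<notin> {-R..R} \<times> {0..t}"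
    then show "(\<lambda>(x, s). indicator {0..t} s * exp (- xi * s) * (phi x * pcont lam v1 v2 i j x s)) z = 0"
      using pcont_supp[of "snd z" "fst z" i] R_def by (cases z) (auto simp: ind_icc)
  next
    show "(\<lambda>(x, s). indicator {0..t} s * exp (- xi * s) * (phi x * pcont lam v1 v2 i j x s)) \<in> borel_measurable (lborel \<Otimes>\<^sub>M lborel)"
      unfolding pcont_def coef_def tau_def ind_ioo ind_icc
      apply (subst measurable_cong_sets[OF sets_pair_measure_cong[OF sets_lborel sets_lborel] refl])
      by measurable
  qed
qed

lemma vj_nz: "vel v1 v2 j \<noteq> 0"
  using cs jj v12 by (auto simp: vel_def)

lemma int_S_aux:
  "integrable lborel (\<lambda>s. indicator {0<..<t} s * (exp (- xi * s) * (phi (vel v1 v2 j * s) / (1 + lam * s))))"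
proof -
  define R where "R = (\<bar>v1\<bar> + \<bar>v2\<bar>) * t"
  obtain B where B: "B \<ge> 0" "\<And>x. x \<in> {-R..R} \<Longrightarrow> \<bar>phi x\<bar> \<le> B" using phi_bdd by blast
  show ?thesis
  proof (rule integrable_bdd1[where a=0 and b=t and B=B])
    fix s
    show "\<bar>indicator {0<..<t} s * (exp (- xi * s) * (phi (vel v1 v2 j * s) / (1 + lam * s)))\<bar> \<le> B"
    proof (cases "s \<in> {0<..<t}")
      case True
      have vs: "\<bar>vel v1 v2 j * s\<bar> \<le> R" unfolding R_def vel_def using True
        by (auto simp: abs_mult intro!: mult_mono)
      have p: "\<bar>phi (vel v1 v2 j * s)\<bar> \<le> B" using B(2)[of "vel v1 v2 j * s"] vs by (auto simp: abs_le_iff)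
      have w: "1 \<le> 1 + lam * s" using True lam by auto
      have e: "exp (- xi * s) \<le> 1" using True xi by simp
      have "\<bar>exp (- xi * s) * (phi (vel v1 v2 j * s) / (1 + lam * s))\<bar>
          = exp (- xi * s) * (\<bar>phi (vel v1 v2 j * s)\<bar> / (1 + lam * s))" using w by (simp add: abs_mult)
      also have "\<dots> \<le> 1 * (B / 1)"
        using e p w B by (intro mult_mono frac_le) auto
      finally show ?thesis using True by simp
    next
      case False
      then show ?thesis using B by simp
    qed
  qed (auto simp: ind_ioo)
qed

lemma Sfun_affine:
  "phi (vel v1 v2 j * s) * Sfun lam xi v1 v2 j (vel v1 v2 j * s) t
     = xi / \<bar>vel v1 v2 j\<bar> * (indicator {0<..<t} s * (exp (- xi * s) * (phi (vel v1 v2 j * s) / (1 + lam * s))))"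
proof -
  define v where "v = vel v1 v2 j"
  have v: "v \<noteq> 0" using vj_nz v_def by simp
  have sg: "sgn v / v = 1 / \<bar>v\<bar>" using v by (cases "v > 0") (auto simp: sgn_if)
  have "Sfun lam xi v1 v2 j (v * s) t = (sgn v / v) * indicator {0<..<t} s * xi * exp (- xi * s) / (1 + lam * s)"
    unfolding Sfun_def v_def[symmetric] using v
    by (simp add: field_simps)
  then show ?thesis unfolding v_def[symmetric] sg by (simp add: field_simps)
qed

lemma int_S: "integrable lborel (\<lambda>x. phi x * Sfun lam xi v1 v2 j x t)"
proof -
  have "integrable lborel (\<lambda>s. xi / \<bar>vel v1 v2 j\<bar> * (indicator {0<..<t} s * (exp (- xi * s) * (phi (vel v1 v2 j * s) / (1 + lam * s)))))"
    using int_S_aux by (rule integrable_mult_right)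
  then have "integrable lborel (\<lambda>s. phi (vel v1 v2 j * s) * Sfun lam xi v1 v2 j (vel v1 v2 j * s) t)"
    unfolding Sfun_affine .
  then show ?thesis using lborel_integrable_real_affine_iff[OF vj_nz, of "\<lambda>x. phi x * Sfun lam xi v1 v2 j x t" 0] by simp
qed

lemma S_value:
  "(\<integral>x. phi x * Sfun lam xi v1 v2 j x t \<partial>lborel)
     = xi * (\<integral>s. indicator {0<..<t} s * (exp (- xi * s) * (phi (vel v1 v2 j * s) / (1 + lam * s))) \<partial>lborel)"
proof -
  have "(\<integral>x. phi x * Sfun lam xi v1 v2 j x t \<partial>lborel)
      = \<bar>vel v1 v2 j\<bar> *\<^sub>R (\<integral>s. (\<lambda>x. phi x * Sfun lam xi v1 v2 j x t) (0 + vel v1 v2 j * s) \<partial>lborel)"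
    by (rule lborel_integral_real_affine[OF vj_nz])
  also have "\<dots> = \<bar>vel v1 v2 j\<bar> * (xi / \<bar>vel v1 v2 j\<bar> * (\<integral>s. indicator {0<..<t} s * (exp (- xi * s) * (phi (vel v1 v2 j * s) / (1 + lam * s))) \<partial>lborel))"
    by (simp only: add_0_left Sfun_affine integral_mult_right_zero real_scaleR_def)
  finally show ?thesis using vj_nz by simp
qed

lemma int_pt: "integrable lborel (\<lambda>x. phi x * (exp (- xi * t) * pcont lam v1 v2 i j x t))"
proof -
  have "integrable lborel (\<lambda>x. exp (- xi * t) * (phi x * pcont lam v1 v2 i j x t))"
    using int_x[of t i] t by (intro integrable_mult_right) auto
  then show ?thesis by (simp add: ac_simps)
qed

lemma fubini_part:
  shows "((\<lambda>s. exp (- xi * s) * (\<integral>x. phi x * pcont lam v1 v2 i j x s \<partial>lborel)) has_integral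
           (\<integral>x. phi x * Qi lam xi v1 v2 i j x t \<partial>lborel)) {0..t}"
    and "integrable lborel (\<lambda>x. phi x * Qi lam xi v1 v2 i j x t)"
proof -
  define Fc where "Fc x s = indicator {0..t} s * exp (- xi * s) * (phi x * pcont lam v1 v2 i j x s)" for x s
  have F: "integrable (lborel \<Otimes>\<^sub>M lborel) (case_prod Fc)"
    unfolding Fc_def using int_2[of i] by simp
  have g_int: "integrable lborel (\<lambda>s. \<integral>x. Fc x s \<partial>lborel)"
    by (rule lborel_pair.integrable_snd[OF F])
  have g_eq: "(\<lambda>s. \<integral>x. Fc x s \<partial>lborel) =
     (\<lambda>s. if s \<in> {0..t} then exp (- xi * s) * (\<integral>x. phi x * pcont lam v1 v2 i j x s \<partial>lborel) else 0)"
    unfolding Fc_def by (auto simp: indicator_def)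
  have "((\<lambda>s. \<integral>x. Fc x s \<partial>lborel) has_integral (\<integral>s. \<integral>x. Fc x s \<partial>lborel \<partial>lborel)) UNIV"
    by (rule has_integral_integral_lborel[OF g_int])
  then have h1: "((\<lambda>s. exp (- xi * s) * (\<integral>x. phi x * pcont lam v1 v2 i j x s \<partial>lborel)) has_integral
      (\<integral>s. \<integral>x. Fc x s \<partial>lborel \<partial>lborel)) {0..t}"
    unfolding g_eq has_integral_restrict_UNIV .
  have fub: "(\<integral>s. \<integral>x. Fc x s \<partial>lborel \<partial>lborel) = (\<integral>x. \<integral>s. Fc x s \<partial>lborel \<partial>lborel)"
    by (rule lborel_pair.Fubini_integral[OF F])
  have inner: "(\<integral>s. Fc x s \<partial>lborel) = phi x * Qi lam xi v1 v2 i j x t" for x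
  proof -
    have "(\<lambda>s. Fc x s) = (\<lambda>s. phi x * (indicator {0..t} s * exp (- xi * s) * pcont lam v1 v2 i j x s))"
      unfolding Fc_def by (auto simp: ac_simps)
    then show ?thesis unfolding Qi_def by simp
  qed
  show "((\<lambda>s. exp (- xi * s) * (\<integral>x. phi x * pcont lam v1 v2 i j x s \<partial>lborel)) has_integral
           (\<integral>x. phi x * Qi lam xi v1 v2 i j x t \<partial>lborel)) {0..t}"
    using h1 unfolding fub inner .
  show "integrable lborel (\<lambda>x. phi x * Qi lam xi v1 v2 i j x t)"
    using lborel_pair.integrable_fst[OF F] unfolding inner .
qed

lemma delta_part:
  "((\<lambda>s. exp (- xi * s) * (phi (vel v1 v2 j * s) / (1 + lam * s))) has_integral
     (\<integral>x. phi x * Sfun lam xi v1 v2 j x t \<partial>lborel) / xi) {0..t}"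
proof -
  define L where "L = (\<integral>s. indicator {0<..<t} s * (exp (- xi * s) * (phi (vel v1 v2 j * s) / (1 + lam * s))) \<partial>lborel)"
  have h: "((\<lambda>s. indicator {0<..<t} s * (exp (- xi * s) * (phi (vel v1 v2 j * s) / (1 + lam * s)))) has_integral L) UNIV"
    unfolding L_def by (rule has_integral_integral_lborel[OF int_S_aux])
  have eq: "(\<lambda>s. indicator {0<..<t} s * (exp (- xi * s) * (phi (vel v1 v2 j * s) / (1 + lam * s))))
     = (\<lambda>s. if s \<in> {0<..<t} then exp (- xi * s) * (phi (vel v1 v2 j * s) / (1 + lam * s)) else 0)"
    by (rule ext) (simp add: indicator_def)
  have "((\<lambda>s. exp (- xi * s) * (phi (vel v1 v2 j * s) / (1 + lam * s))) has_integral L) {0..t}"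
    using h unfolding eq has_integral_restrict_UNIV has_integral_Icc_iff_Ioo .
  then show ?thesis unfolding S_value L_def[symmetric] using xi by simp
qed

lemma ptact_decomp:
  "ptact lam xi v1 v2 i j phi t =
    (if i = j then exp (- xi * t) * phi (vel v1 v2 j * t) / (1 + lam * t) else 0)
    + (\<integral>x. phi x * (exp (- xi * t) * pcont lam v1 v2 i j x t) \<partial>lborel)
    + (if i = j then (\<integral>x. phi x * Sfun lam xi v1 v2 j x t \<partial>lborel) else 0)
    + xi * (\<integral>x. phi x * Qi lam xi v1 v2 i j x t \<partial>lborel)"
proof -
  define P where "P s = (\<integral>x. phi x * pcont lam v1 v2 i j x s \<partial>lborel)" for s
  define D where "D s = (if i = j then phi (vel v1 v2 j * s) / (1 + lam * s) else 0)" for s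
  have pact: "pact lam v1 v2 i j phi s = D s + P s" if "s \<in> {0..t}" for s
    unfolding pact_def D_def P_def using integral_lborel[OF int_x[OF that, of i]] by simp
  have dI: "((\<lambda>s. exp (- xi * s) * D s) has_integral
      (if i = j then (\<integral>x. phi x * Sfun lam xi v1 v2 j x t \<partial>lborel) / xi else 0)) {0..t}"
    using delta_part unfolding D_def by (cases "i = j") auto
  have pI: "((\<lambda>s. exp (- xi * s) * P s) has_integral (\<integral>x. phi x * Qi lam xi v1 v2 i j x t \<partial>lborel)) {0..t}"
    unfolding P_def by (rule fubini_part(1))
  have "integral {0..t} (\<lambda>s. exp (- xi * s) * pact lam v1 v2 i j phi s)
      = integral {0..t} (\<lambda>s. exp (- xi * s) * D s + exp (- xi * s) * P s)"
    by (rule integral_cong) (simp add: pact distrib_left)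
  also have "\<dots> = (if i = j then (\<integral>x. phi x * Sfun lam xi v1 v2 j x t \<partial>lborel) / xi else 0)
      + (\<integral>x. phi x * Qi lam xi v1 v2 i j x t \<partial>lborel)"
    by (rule integral_unique[OF has_integral_add[OF dI pI]])
  finally have I: "integral {0..t} (\<lambda>s. exp (- xi * s) * pact lam v1 v2 i j phi s) = \<dots>" .
  have Pt: "exp (- xi * t) * P t = (\<integral>x. phi x * (exp (- xi * t) * pcont lam v1 v2 i j x t) \<partial>lborel)"
  proof -
    have "(\<lambda>x. phi x * (exp (- xi * t) * pcont lam v1 v2 i j x t)) = (\<lambda>x. exp (- xi * t) * (phi x * pcont lam v1 v2 i j x t))"
      by (auto simp: ac_simps)
    then show ?thesis unfolding P_def by simp
  qed
  have "ptact lam xi v1 v2 i j phi t = exp (- xi * t) * (D t + P t) + xi * integral {0..t} (\<lambda>s. exp (- xi * s) * pact lam v1 v2 i j phi s)"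
    unfolding ptact_def using pact[of t] t by simp
  also have "\<dots> = exp (- xi * t) * D t + exp (- xi * t) * P t + xi * ((if i = j then (\<integral>x. phi x * Sfun lam xi v1 v2 j x t \<partial>lborel) / xi else 0)
      + (\<integral>x. phi x * Qi lam xi v1 v2 i j x t \<partial>lborel))"
    unfolding I by (simp add: distrib_left)
  finally show ?thesis unfolding Pt D_def using xi by (auto simp: distrib_left)
qed

lemma Q_lin:
  assumes h: "\<And>s. s \<in> {0..t} \<Longrightarrow> exp (- xi * s) * (c1 * pcont lam v1 v2 1 j x s + c2 * pcont lam v1 v2 2 j x s)
               = lam / (v1 - v2) * (indicator {v2 * s <..< v1 * s} x * Kf lam xi al be s)"
  shows "c1 * Qi lam xi v1 v2 1 j x t + c2 * Qi lam xi v1 v2 2 j x t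
     = lam / (v1 - v2) * (Ibold v1 v2 x t * Rf lam xi al be (aa v1 v2 x) (bb v1 v2 x t))"
proof -
  define G where "G s = c1 * (indicator {0..t} s * exp (- xi * s) * pcont lam v1 v2 1 j x s)
     + c2 * (indicator {0..t} s * exp (- xi * s) * pcont lam v1 v2 2 j x s)" for s
  have i1: "integrable lborel (\<lambda>s. c1 * (indicator {0..t} s * exp (- xi * s) * pcont lam v1 v2 1 j x s))"
    by (rule integrable_mult_right) (rule int_s)
  have i2: "integrable lborel (\<lambda>s. c2 * (indicator {0..t} s * exp (- xi * s) * pcont lam v1 v2 2 j x s))"
    by (rule integrable_mult_right) (rule int_s)
  have Gi: "integrable lborel G" unfolding G_def
    by (rule Bochner_Integration.integrable_add[OF i1 i2])
  have "c1 * Qi lam xi v1 v2 1 j x t + c2 * Qi lam xi v1 v2 2 j x t = (\<integral>s. G s \<partial>lborel)"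
    unfolding G_def Qi_def Bochner_Integration.integral_add[OF i1 i2] by simp
  moreover have "(G has_integral (\<integral>s. G s \<partial>lborel)) UNIV"
    by (rule has_integral_integral_lborel[OF Gi])
  moreover have "(G has_integral lam / (v1 - v2) * (Ibold v1 v2 x t * Rf lam xi al be (aa v1 v2 x) (bb v1 v2 x t))) UNIV"
  proof -
    have q: "((\<lambda>s. lam / (v1 - v2) * (indicator {v2 * s <..< v1 * s} x * Kf lam xi al be s)) has_integral
         lam / (v1 - v2) * (Ibold v1 v2 x t * Rf lam xi al be (aa v1 v2 x) (bb v1 v2 x t))) {0..t}"
      by (rule has_integral_mult_right[OF Q_has[OF lam xi v12 cs t]])
    have eq: "G = (\<lambda>s. if s \<in> {0..t} then lam / (v1 - v2) * (indicator {v2 * s <..< v1 * s} x * Kf lam xi al be s) else 0)"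
    proof
      fix s show "G s = (if s \<in> {0..t} then lam / (v1 - v2) * (indicator {v2 * s <..< v1 * s} x * Kf lam xi al be s) else 0)"
      proof (cases "s \<in> {0..t}")
        case True
        then show ?thesis unfolding G_def using h[OF True] by (simp add: algebra_simps)
      next
        case False
        then show ?thesis unfolding G_def by (auto simp: indicator_def)
      qed
    qed
    show ?thesis unfolding eq has_integral_restrict_UNIV by (rule q)
  qed
  ultimately show ?thesis using has_integral_unique by metis
qed

lemma j_cases: "j = 1 \<or> j = 2" using jj by auto

lemma GammaL_eq: "GammaL lam xi v1 v2 x t = incgamma 0 ((aa v1 v2 x + 1 / lam) * xi) ((bb v1 v2 x t + 1 / lam) * xi)"
  using cs unfolding GammaL_def aa_def bb_def by auto

lemma ThetaL_eq: "ThetaL lam xi v1 v2 x t = Ef lam xi (aa v1 v2 x) - Ef lam xi (bb v1 v2 x t)"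
  using cs unfolding ThetaL_def aa_def bb_def Ef_def by auto

lemma Q_sum: "xi * (Qi lam xi v1 v2 1 j x t + Qi lam xi v1 v2 2 j x t)
   = Ibold v1 v2 x t * xi * exp (xi / lam) / (v1 - v2) * GammaL lam xi v1 v2 x t"
proof -
  have "1 * Qi lam xi v1 v2 1 j x t + 1 * Qi lam xi v1 v2 2 j x t
     = lam / (v1 - v2) * (Ibold v1 v2 x t * Rf lam xi 1 lam (aa v1 v2 x) (bb v1 v2 x t))"
  proof (rule Q_lin)
    fix s assume s: "s \<in> {0..t}"
    have "0 \<le> lam * s" using s lam by simp
    then have w: "1 + lam * s \<noteq> 0" by linarith
    have d: "v1 - v2 \<noteq> 0" using v12 by simp
    have "1 * coef lam v1 v2 1 j x s + 1 * coef lam v1 v2 2 j x s = 1 + lam * s"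
      using j_cases unfolding coef_def by (auto simp: algebra_simps)
    from lin_aux[OF this d, of "(1 + lam * s)^2" "exp (- xi * s)" "indicator {v2 * s <..< v1 * s} x" lam] w
    show "exp (- xi * s) * (1 * pcont lam v1 v2 1 j x s + 1 * pcont lam v1 v2 2 j x s)
       = lam / (v1 - v2) * (indicator {v2 * s <..< v1 * s} x * Kf lam xi 1 lam s)"
      unfolding pcont_def Kf_def by simp
  qed
  moreover have "Rf lam xi 1 lam (aa v1 v2 x) (bb v1 v2 x t)
      = exp (xi / lam) / lam * incgamma 0 ((aa v1 v2 x + 1 / lam) * xi) ((bb v1 v2 x t + 1 / lam) * xi)"
    unfolding Rf_def using lam by simp
  ultimately show ?thesis unfolding GammaL_eq using sum_aux[of lam "v1 - v2" xi] lam v12 by simp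
qed

lemma Q_diff: "xi * (Qi lam xi v1 v2 1 j x t - Qi lam xi v1 v2 2 j x t)
   = Ibold v1 v2 x t *
       (2 * xi * (vel v1 v2 (3 - j) + lam * x) / (v1 - v2)^2 * ThetaL lam xi v1 v2 x t
        - xi * exp (xi / lam) / (v1 - v2)^2
          * (2 * vel v1 v2 (3 - j) * xi * (x / vel v1 v2 (3 - j) + 1 / lam) + (v1 + v2))
          * GammaL lam xi v1 v2 x t)"
proof -
  define al where "al = 2 * lam * x / (v1 - v2) + (-1) ^ j"
  define be where "be = - lam * (v1 + v2) / (v1 - v2)"
  have "1 * Qi lam xi v1 v2 1 j x t + (-1) * Qi lam xi v1 v2 2 j x t
     = lam / (v1 - v2) * (Ibold v1 v2 x t * Rf lam xi al be (aa v1 v2 x) (bb v1 v2 x t))"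
  proof (rule Q_lin)
    fix s assume s: "s \<in> {0..t}"
    have "0 \<le> lam * s" using s lam by simp
    then have w: "1 + lam * s \<noteq> 0" by linarith
    have d: "v1 - v2 \<noteq> 0" using v12 by simp
    have "1 * coef lam v1 v2 1 j x s + (-1) * coef lam v1 v2 2 j x s = al + be * s"
      using coef_diff[of v1 v2 j lam x s] j_cases d unfolding al_def be_def by simp
    from lin_aux[OF this d, of "(1 + lam * s)^2" "exp (- xi * s)" "indicator {v2 * s <..< v1 * s} x" lam] w
    show "exp (- xi * s) * (1 * pcont lam v1 v2 1 j x s + (-1) * pcont lam v1 v2 2 j x s)
       = lam / (v1 - v2) * (indicator {v2 * s <..< v1 * s} x * Kf lam xi al be s)"
      unfolding pcont_def Kf_def by simp
  qed
  then have "xi * (Qi lam xi v1 v2 1 j x t - Qi lam xi v1 v2 2 j x t)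
     = xi * (lam / (v1 - v2) * (Ibold v1 v2 x t * Rf lam xi al be (aa v1 v2 x) (bb v1 v2 x t)))" by simp
  also have "\<dots> = Ibold v1 v2 x t *
       (2 * xi * (vel v1 v2 (3 - j) + lam * x) / (v1 - v2)^2 * (Ef lam xi (aa v1 v2 x) - Ef lam xi (bb v1 v2 x t))
        - xi * exp (xi / lam) / (v1 - v2)^2
          * (2 * vel v1 v2 (3 - j) * xi * (x / vel v1 v2 (3 - j) + 1 / lam) + (v1 + v2))
          * incgamma 0 ((aa v1 v2 x + 1 / lam) * xi) ((bb v1 v2 x t + 1 / lam) * xi))"
    unfolding Rf_def al_def be_def
  proof (rule alg_diff)
    show "lam \<noteq> 0" using lam by simp
    show "v1 - v2 \<noteq> 0" using v12 by simp
    show "vel v1 v2 (3 - j) \<noteq> 0" using j_cases cs v12 by (auto simp: vel_def)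
    show "((-1) ^ j = (-1::real) \<and> vel v1 v2 (3 - j) = v2) \<or> ((-1) ^ j = (1::real) \<and> vel v1 v2 (3 - j) = v1)"
      using j_cases by (auto simp: vel_def)
  qed
  finally show ?thesis unfolding GammaL_eq ThetaL_eq .
qed

lemma pc_sum_t: "exp (- xi * t) * pcont lam v1 v2 1 j x t + exp (- xi * t) * pcont lam v1 v2 2 j x t
   = indicator {v2 * t <..< v1 * t} x * exp (- xi * t) * lam / ((v1 - v2) * (1 + lam * t))"
proof -
  have "0 < lam * t" using lam t by simp
  then have w: "1 + lam * t \<noteq> 0" by linarith
  have d: "v1 - v2 \<noteq> 0" using v12 by simp
  have c: "coef lam v1 v2 1 j x t + coef lam v1 v2 2 j x t = 1 + lam * t"
    using j_cases unfolding coef_def by (auto simp: algebra_simps)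
  have "exp (- xi * t) * pcont lam v1 v2 1 j x t + exp (- xi * t) * pcont lam v1 v2 2 j x t
     = indicator {v2 * t <..< v1 * t} x * exp (- xi * t) * lam * (coef lam v1 v2 1 j x t + coef lam v1 v2 2 j x t) / ((v1 - v2) * (1 + lam * t)^2)"
    unfolding pcont_def by (simp add: add_divide_distrib algebra_simps)
  also have "\<dots> = indicator {v2 * t <..< v1 * t} x * exp (- xi * t) * lam / ((v1 - v2) * (1 + lam * t))"
    unfolding c using cancel_aux[OF w d] by simp
  finally show ?thesis .
qed

lemma pc_diff_t: "exp (- xi * t) * pcont lam v1 v2 1 j x t - exp (- xi * t) * pcont lam v1 v2 2 j x t
   = indicator {v2 * t <..< v1 * t} x * lam * exp (- xi * t)
       * (lam * (2 * tau v1 v2 x t - t) + (-1) ^ j) / ((v1 - v2) * (1 + lam * t)^2)"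
proof -
  have c: "coef lam v1 v2 1 j x t - coef lam v1 v2 2 j x t = lam * (2 * tau v1 v2 x t - t) + (-1) ^ j"
    using j_cases unfolding coef_def by (auto simp: algebra_simps)
  have "exp (- xi * t) * pcont lam v1 v2 1 j x t - exp (- xi * t) * pcont lam v1 v2 2 j x t
     = indicator {v2 * t <..< v1 * t} x * lam * exp (- xi * t) * (coef lam v1 v2 1 j x t - coef lam v1 v2 2 j x t) / ((v1 - v2) * (1 + lam * t)^2)"
    unfolding pcont_def by (simp add: diff_divide_distrib algebra_simps)
  then show ?thesis unfolding c .
qed

lemma dens_pt: "exp (- xi * t) * pcont lam v1 v2 1 j x t + exp (- xi * t) * pcont lam v1 v2 2 j x t
    + Sfun lam xi v1 v2 j x t + xi * (Qi lam xi v1 v2 1 j x t + Qi lam xi v1 v2 2 j x t)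
    = dens_cont lam xi v1 v2 j x t"
  unfolding pc_sum_t Q_sum dens_cont_def Sfun_def by (simp add: algebra_simps)

lemma flow_pt: "exp (- xi * t) * pcont lam v1 v2 1 j x t - exp (- xi * t) * pcont lam v1 v2 2 j x t
    + (-1) ^ (j - 1) * Sfun lam xi v1 v2 j x t + xi * (Qi lam xi v1 v2 1 j x t - Qi lam xi v1 v2 2 j x t)
    = flow_cont lam xi v1 v2 j x t"
  unfolding pc_diff_t Q_diff flow_cont_def Sfun_def by (simp add: algebra_simps)

lemma main_both:
  "ptact lam xi v1 v2 1 j phi t + ptact lam xi v1 v2 2 j phi t
        = exp (- xi * t) / (1 + lam * t) * phi (vel v1 v2 j * t)
          + integral UNIV (\<lambda>x. phi x * dens_cont lam xi v1 v2 j x t)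
    \<and> ptact lam xi v1 v2 1 j phi t - ptact lam xi v1 v2 2 j phi t
        = (-1) ^ (j - 1) * exp (- xi * t) / (1 + lam * t) * phi (vel v1 v2 j * t)
          + integral UNIV (\<lambda>x. phi x * flow_cont lam xi v1 v2 j x t)"
proof -
  define T where "T i x = phi x * (exp (- xi * t) * pcont lam v1 v2 i j x t)" for i x
  define Sx where "Sx x = phi x * Sfun lam xi v1 v2 j x t" for x
  define Q where "Q i x = phi x * Qi lam xi v1 v2 i j x t" for i x
  have iT: "integrable lborel (T i)" for i unfolding T_def by (rule int_pt)
  have iS: "integrable lborel Sx" unfolding Sx_def by (rule int_S)
  have iQ: "integrable lborel (Q i)" for i unfolding Q_def by (rule fubini_part(2))
  define sg :: real where "sg = (-1) ^ (j - 1)"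
  have eq1: "(\<lambda>x. phi x * dens_cont lam xi v1 v2 j x t) = (\<lambda>x. T 1 x + T 2 x + Sx x + (xi * Q 1 x + xi * Q 2 x))"
    unfolding T_def Sx_def Q_def dens_pt[symmetric] by (auto simp: algebra_simps)
  have eq2: "(\<lambda>x. phi x * flow_cont lam xi v1 v2 j x t) = (\<lambda>x. T 1 x - T 2 x + sg * Sx x + (xi * Q 1 x - xi * Q 2 x))"
    unfolding T_def Sx_def Q_def flow_pt[symmetric] sg_def by (auto simp: algebra_simps)
  have int1: "integral UNIV (\<lambda>x. phi x * dens_cont lam xi v1 v2 j x t)
     = integral\<^sup>L lborel (T 1) + integral\<^sup>L lborel (T 2) + integral\<^sup>L lborel Sx + (xi * integral\<^sup>L lborel (Q 1) + xi * integral\<^sup>L lborel (Q 2))"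
    unfolding eq1 using iT iS iQ
    by (subst integral_lborel) (auto simp: Bochner_Integration.integral_add)
  have int2: "integral UNIV (\<lambda>x. phi x * flow_cont lam xi v1 v2 j x t)
     = integral\<^sup>L lborel (T 1) - integral\<^sup>L lborel (T 2) + sg * integral\<^sup>L lborel Sx + (xi * integral\<^sup>L lborel (Q 1) - xi * integral\<^sup>L lborel (Q 2))"
    unfolding eq2 using iT iS iQ
    by (subst integral_lborel) (auto simp: Bochner_Integration.integral_add Bochner_Integration.integral_diff)
  have p1: "ptact lam xi v1 v2 1 j phi t = (if 1 = j then exp (- xi * t) * phi (vel v1 v2 j * t) / (1 + lam * t) else 0)
      + integral\<^sup>L lborel (T 1) + (if 1 = j then integral\<^sup>L lborel Sx else 0) + xi * integral\<^sup>L lborel (Q 1)"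
    unfolding T_def Sx_def Q_def by (rule ptact_decomp)
  have p2: "ptact lam xi v1 v2 2 j phi t = (if 2 = j then exp (- xi * t) * phi (vel v1 v2 j * t) / (1 + lam * t) else 0)
      + integral\<^sup>L lborel (T 2) + (if 2 = j then integral\<^sup>L lborel Sx else 0) + xi * integral\<^sup>L lborel (Q 2)"
    unfolding T_def Sx_def Q_def by (rule ptact_decomp)
  show ?thesis
    using j_cases
  proof
    assume j1: "j = 1"
    then have "sg = 1" unfolding sg_def by simp
    then show ?thesis unfolding int1 int2 p1 p2 using j1 by (simp add: algebra_simps)
  next
    assume j2: "j = 2"
    then have "sg = -1" unfolding sg_def by simp
    then show ?thesis unfolding int1 int2 p1 p2 using j2 by (simp add: algebra_simps)
  qed
qed

end

theorem theorem2:
  fixes lam xi v1 v2 t :: real and j :: nat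
  assumes "lam > 0" and "xi > 0" and "v2 < v1"
    and "(v2 < 0 \<and> 0 < v1) \<or> (0 < v2 \<and> v2 < v1)"
    and "j \<in> {1, 2}" and "t > 0"
  shows "\<forall>phi. continuous_on UNIV phi \<longrightarrow>
      ptact lam xi v1 v2 1 j phi t + ptact lam xi v1 v2 2 j phi t
        = exp (- xi * t) / (1 + lam * t) * phi (vel v1 v2 j * t)
          + integral UNIV (\<lambda>x. phi x * dens_cont lam xi v1 v2 j x t)
    \<and> ptact lam xi v1 v2 1 j phi t - ptact lam xi v1 v2 2 j phi t
        = (-1) ^ (j - 1) * exp (- xi * t) / (1 + lam * t) * phi (vel v1 v2 j * t)
          + integral UNIV (\<lambda>x. phi x * flow_cont lam xi v1 v2 j x t)"
  using main_both[OF assms] by blast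

end
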